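(* Assume $PS(h,P_h)>PS(\ell,P_h)$ and $PS(\ell,P_\ell)>PS(h,P_\ell)$. Fix an integer $d\ge 2$. Consider a sequence of peer prediction instances indexed by $n$, with the following properties: - they all share the same values of $P(h)$, $P(h\mid h)$, $P(h\mid\ell)$ and the same $PS$; - for each $n$, the admissible family $\mathcal D_n$ contains some set $D_n\subseteq[n]$ with $|D_n|=d$; - for each signal profile $s_D\in\{\ell,h\}^d$ of $D_n$ containing at least one $h$ and at least one $\ell$, the conditional probability $p(s_D)=Q_n(\Psi_j=h\mid \Psi_{D_n}=s_D)$ for $j\notin D_n$ does not depend on $n$. Then for all sufficiently large $n$, the truthful profile $\Sigma^*$ is not an interim $\mathcal D_n$ equilibrium.
   Context: Peer prediction setting. There are $n$ agents. Signals $\Psi_i\in\{\ell,h\}$ are drawn from a symmetric common prior $Q_n$ on $\{\ell,h\}^n$. $P(s\mid s')$ is the probability that another agent has signal $s$ given that one's own signal is $s'$, and $P_{s'}=P(\cdot\mid s')$. Standing assumptions: $P(\ell),P(h)>0$, $P(h\mid h)>P(h\mid\ell)$, $P(h\mid\ell)>0$ and $P(\ell\mid h)>0$. $PS$ is a strictly proper scoring rule. Each agent reports $r_i\in\{\ell,h\}$ and receives $v_i=\frac1{n-1}\sum_{j\ne i}PS(r_j,P_{r_i})$. Strategies map signals to distributions over reports, and $\Sigma^*$ is the profile in which every agent reports truthfully. Given a family $\mathcal D$ of admissible subsets of $[n]$, a profile $\Sigma$ is an interim $\mathcal D$ equilibrium if there do not exist $D\in\mathcal D$, a signal profile $s_D=(s_i)_{i\in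 D}$, and a profile $\Sigma'$ such that: (1) $\sigma'_i=\sigma_i$ for all $i\notin D$; and (2) for all $i\in D$, $u_i(\Sigma'\mid s_D)>u_i(\Sigma\mid s_D)$. Here $u_i(\cdot\mid s_D)$ is $i$'s expected utility conditioned on the signals of all members of $D$ being $s_D$. *)

theory Defs
  imports Complex_Main "HOL-Library.FuncSet" "HOL-Combinatorics.Permutations"
begin

(* Signals / reports: True = h, False = l.  Agents: [n] = {..<n}. *)

definition profiles :: "nat set \<Rightarrow> (nat \<Rightarrow> bool) set" where
  "profiles A = PiE A (\<lambda>_. UNIV)"

definition symmetric_prior :: "nat \<Rightarrow> ((nat \<Rightarrow> bool) \<Rightarrow> real) \<Rightarrow> bool" where
  "symmetric_prior n Q \<longleftrightarrow>
     (\<forall>\<psi>\<in>profiles {..<n}. Q \<psi> \<ge> 0) \<and>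
     (\<Sum>\<psi>\<in>profiles {..<n}. Q \<psi>) = 1 \<and>
     (\<forall>\<pi> \<psi>. \<pi> permutes {..<n} \<longrightarrow> \<psi> \<in> profiles {..<n} \<longrightarrow> Q (\<psi> \<circ> \<pi>) = Q \<psi>)"

definition prQ :: "nat \<Rightarrow> ((nat \<Rightarrow> bool) \<Rightarrow> real) \<Rightarrow> ((nat \<Rightarrow> bool) \<Rightarrow> bool) \<Rightarrow> real" where
  "prQ n Q E = (\<Sum>\<psi>\<in>{\<psi>\<in>profiles {..<n}. E \<psi>}. Q \<psi>)"

(* P(h): probability that an agent (agent 0; by symmetry any) has signal h *)
definition Ph :: "nat \<Rightarrow> ((nat \<Rightarrow> bool) \<Rightarrow> real) \<Rightarrow> real" where
  "Ph n Q = prQ n Q (\<lambda>\<psi>. \<psi> 0)"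

(* P(h | s'): probability that another agent (agent 1) has h given own (agent 0) signal s' *)
definition Pcond :: "nat \<Rightarrow> ((nat \<Rightarrow> bool) \<Rightarrow> real) \<Rightarrow> bool \<Rightarrow> real" where
  "Pcond n Q s' = prQ n Q (\<lambda>\<psi>. \<psi> 0 = s' \<and> \<psi> 1) / prQ n Q (\<lambda>\<psi>. \<psi> 0 = s')"

definition valid_prior :: "nat \<Rightarrow> ((nat \<Rightarrow> bool) \<Rightarrow> real) \<Rightarrow> bool" where
  "valid_prior n Q \<longleftrightarrow> n \<ge> 2 \<and> symmetric_prior n Q \<and>
     1 - Ph n Q > 0 \<and> Ph n Q > 0 \<and>
     Pcond n Q True > Pcond n Q False \<and>
     Pcond n Q False > 0 \<and> 1 - Pcond n Q True > 0"

(* Binary scoring rule PS r q: score of outcome r (True = h) under the forecast giving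
   probability q to h.  Strict properness on forecasts q in [0,1]. *)
definition strictly_proper :: "(bool \<Rightarrow> real \<Rightarrow> real) \<Rightarrow> bool" where
  "strictly_proper PS \<longleftrightarrow>
     (\<forall>p\<in>{0..1}. \<forall>q\<in>{0..1}. p \<noteq> q \<longrightarrow>
        p * PS True q + (1 - p) * PS False q < p * PS True p + (1 - p) * PS False p)"

(* Strategy profile: Sigma i s = probability that agent i reports h when its signal is s *)
definition valid_profile :: "nat \<Rightarrow> (nat \<Rightarrow> bool \<Rightarrow> real) \<Rightarrow> bool" where
  "valid_profile n \<Sigma> \<longleftrightarrow> (\<forall>i<n. \<forall>s. 0 \<le> \<Sigma> i s \<and> \<Sigma> i s \<le> 1)"

definition truthful :: "nat \<Rightarrow> bool \<Rightarrow> real" where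
  "truthful i s = (if s then 1 else 0)"

definition rprob :: "real \<Rightarrow> bool \<Rightarrow> real" where
  "rprob x r = (if r then x else 1 - x)"

definition payment :: "nat \<Rightarrow> ((nat \<Rightarrow> bool) \<Rightarrow> real) \<Rightarrow> (bool \<Rightarrow> real \<Rightarrow> real)
     \<Rightarrow> (nat \<Rightarrow> bool) \<Rightarrow> nat \<Rightarrow> real" where
  "payment n Q PS r i =
     (\<Sum>j\<in>{..<n} - {i}. PS (r j) (Pcond n Q (r i))) / (real n - 1)"

definition exp_payment :: "nat \<Rightarrow> ((nat \<Rightarrow> bool) \<Rightarrow> real) \<Rightarrow> (bool \<Rightarrow> real \<Rightarrow> real)
     \<Rightarrow> (nat \<Rightarrow> bool \<Rightarrow> real) \<Rightarrow> (nat \<Rightarrow> bool) \<Rightarrow> nat \<Rightarrow> real" where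
  "exp_payment n Q PS \<Sigma> \<psi> i =
     (\<Sum>r\<in>profiles {..<n}. (\<Prod>k<n. rprob (\<Sigma> k (\<psi> k)) (r k)) * payment n Q PS r i)"

(* u_i(Sigma | s_D): expected utility of i conditioned on Psi_D = s_D
   (convention: 0 if the conditioning event has probability 0) *)
definition cond_util :: "nat \<Rightarrow> ((nat \<Rightarrow> bool) \<Rightarrow> real) \<Rightarrow> (bool \<Rightarrow> real \<Rightarrow> real)
     \<Rightarrow> (nat \<Rightarrow> bool \<Rightarrow> real) \<Rightarrow> nat set \<Rightarrow> (nat \<Rightarrow> bool) \<Rightarrow> nat \<Rightarrow> real" where
  "cond_util n Q PS \<Sigma> D sD i =
     (\<Sum>\<psi>\<in>{\<psi>\<in>profiles {..<n}. \<forall>k\<in>D. \<psi> k = sD k}. Q \<psi> * exp_payment n Q PS \<Sigma> \<psi> i)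
     / prQ n Q (\<lambda>\<psi>. \<forall>k\<in>D. \<psi> k = sD k)"

definition interim_equilibrium :: "nat \<Rightarrow> ((nat \<Rightarrow> bool) \<Rightarrow> real) \<Rightarrow> (bool \<Rightarrow> real \<Rightarrow> real)
     \<Rightarrow> nat set set \<Rightarrow> (nat \<Rightarrow> bool \<Rightarrow> real) \<Rightarrow> bool" where
  "interim_equilibrium n Q PS \<D> \<Sigma> \<longleftrightarrow>
     \<not> (\<exists>D\<in>\<D>. \<exists>sD\<in>profiles D. \<exists>\<Sigma>'. valid_profile n \<Sigma>' \<and>
           (\<forall>i\<in>{..<n} - D. \<Sigma>' i = \<Sigma> i) \<and>
           (\<forall>i\<in>D. cond_util n Q PS \<Sigma>' D sD i > cond_util n Q PS \<Sigma> D sD i))"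

definition cond_prob_h :: "nat \<Rightarrow> ((nat \<Rightarrow> bool) \<Rightarrow> real) \<Rightarrow> nat set \<Rightarrow> (nat \<Rightarrow> bool) \<Rightarrow> nat \<Rightarrow> real" where
  "cond_prob_h n Q D sD j =
     prQ n Q (\<lambda>\<psi>. \<psi> j \<and> (\<forall>k\<in>D. \<psi> k = sD k)) / prQ n Q (\<lambda>\<psi>. \<forall>k\<in>D. \<psi> k = sD k)"

end

theory Submission
  imports Defs
begin


lemma exp_payment_det:
  assumes det: "\<forall>k<n. \<Sigma> k (\<psi> k) = (if g k then 1 else 0)"
  shows "exp_payment n Q PS \<Sigma> \<psi> i = payment n Q PS (restrict g {..<n}) i"
proof -
  let ?r0 = "restrict g {..<n}"
  have r0: "?r0 \<in> profiles {..<n}" by (simp add: profiles_def)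
  have fin: "finite (profiles {..<n})" by (simp add: profiles_def finite_PiE)
  have key: "(\<Prod>k<n. rprob (\<Sigma> k (\<psi> k)) (r k)) = (if ?r0 = r then 1 else 0)"
    if r: "r \<in> profiles {..<n}" for r
  proof (cases "?r0 = r")
    case True
    then show ?thesis using det by (auto simp: rprob_def intro!: prod.neutral)
  next
    case False
    then obtain k where k: "k < n" "r k \<noteq> g k"
    proof -
      have "\<not> (\<forall>k\<in>{..<n}. ?r0 k = r k)"
      proof
        assume "\<forall>k\<in>{..<n}. ?r0 k = r k"
        then have "?r0 = r" using r r0 unfolding profiles_def by (intro PiE_ext) auto
        then show False using False by simp
      qed
      then show ?thesis using that by auto
    qed
    have z: "rprob (\<Sigma> k (\<psi> k)) (r k) = 0" using det k by (auto simp: rprob_def)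
    have "(\<Prod>k<n. rprob (\<Sigma> k (\<psi> k)) (r k)) = 0"
      proof (rule prod_zero[OF finite_lessThan])
      show "\<exists>a\<in>{..<n}. rprob (\<Sigma> a (\<psi> a)) (r a) = 0"
        using z k by blast
    qed
    then show ?thesis using False by simp
  qed
  have "exp_payment n Q PS \<Sigma> \<psi> i = (\<Sum>r\<in>profiles {..<n}. if ?r0 = r then payment n Q PS r i else 0)"
    unfolding exp_payment_def by (rule sum.cong) (auto simp: key)
  also have "\<dots> = payment n Q PS ?r0 i" using fin r0 by (simp add: sum.delta)
  finally show ?thesis .
qed



lemma cond_util_det:
  assumes Dn: "D \<subseteq> {..<n}" and iD: "i \<in> D" and n2: "n \<ge> 2"
  and pos: "prQ n Q (\<lambda>\<psi>. \<forall>k\<in>D. \<psi> k = sD k) > 0"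
  and cp: "\<forall>j\<in>{..<n} - D. cond_prob_h n Q D sD j = p"
  and det: "\<forall>\<psi>\<in>profiles {..<n}. (\<forall>k\<in>D. \<psi> k = sD k) \<longrightarrow>
      (\<forall>k<n. \<Sigma> k (\<psi> k) = (if (if k\<in>D then f k else \<psi> k) then 1 else 0))"
  shows "cond_util n Q PS \<Sigma> D sD i =
     ((\<Sum>j\<in>D-{i}. PS (f j) (Pcond n Q (f i))) +
      (real n - real (card D)) * (p * PS True (Pcond n Q (f i)) + (1-p) * PS False (Pcond n Q (f i))))
     / (real n - 1)"
proof -
  define E where "E = {\<psi>\<in>profiles {..<n}. \<forall>k\<in>D. \<psi> k = sD k}"
  define Z where "Z = prQ n Q (\<lambda>\<psi>. \<forall>k\<in>D. \<psi> k = sD k)"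
  define q where "q = Pcond n Q (f i)"
  have Zdef: "Z = sum Q E" unfolding Z_def E_def prQ_def by simp
  have finE: "finite E" unfolding E_def profiles_def by (simp add: finite_PiE)
  have finD: "finite D" using Dn finite_subset by blast
  have iN: "i < n" using iD Dn by auto
  define h where "h \<psi> j = PS (if j \<in> D then f j else \<psi> j) q" for \<psi> j
  have ep: "exp_payment n Q PS \<Sigma> \<psi> i = (\<Sum>j\<in>{..<n}-{i}. h \<psi> j) / (real n - 1)"
    if "\<psi> \<in> E" for \<psi>
  proof -
    have "exp_payment n Q PS \<Sigma> \<psi> i =
       payment n Q PS (restrict (\<lambda>k. if k\<in>D then f k else \<psi> k) {..<n}) i"
      using det that unfolding E_def by (intro exp_payment_det) auto
    also have "\<dots> = (\<Sum>j\<in>{..<n}-{i}. h \<psi> j) / (real n - 1)"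
      unfolding payment_def h_def q_def using iN iD by (auto intro!: sum.cong)
    finally show ?thesis .
  qed
  have num: "(\<Sum>\<psi>\<in>E. Q \<psi> * exp_payment n Q PS \<Sigma> \<psi> i)
      = (\<Sum>j\<in>{..<n}-{i}. \<Sum>\<psi>\<in>E. Q \<psi> * h \<psi> j) / (real n - 1)"
  proof -
    have "(\<Sum>\<psi>\<in>E. Q \<psi> * exp_payment n Q PS \<Sigma> \<psi> i)
        = (\<Sum>\<psi>\<in>E. (\<Sum>j\<in>{..<n}-{i}. Q \<psi> * h \<psi> j) / (real n - 1))"
      by (rule sum.cong) (auto simp: ep sum_distrib_left)
    also have "\<dots> = (\<Sum>\<psi>\<in>E. \<Sum>j\<in>{..<n}-{i}. Q \<psi> * h \<psi> j) / (real n - 1)"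
      by (simp add: sum_divide_distrib)
    also have "\<dots> = (\<Sum>j\<in>{..<n}-{i}. \<Sum>\<psi>\<in>E. Q \<psi> * h \<psi> j) / (real n - 1)"
      by (subst sum.swap) simp
    finally show ?thesis .
  qed
  define S where "S = p * PS True q + (1-p) * PS False q"
  have inD: "(\<Sum>\<psi>\<in>E. Q \<psi> * h \<psi> j) = Z * PS (f j) q" if "j \<in> D" for j
    using that by (simp add: h_def Zdef sum_distrib_right mult.commute)
  have outD: "(\<Sum>\<psi>\<in>E. Q \<psi> * h \<psi> j) = Z * S" if j: "j \<in> {..<n} - D" for j
  proof -
    define X where "X = prQ n Q (\<lambda>\<psi>. \<psi> j \<and> (\<forall>k\<in>D. \<psi> k = sD k))"
    have Xs: "X = sum Q (E \<inter> {\<psi>. \<psi> j})" unfolding X_def prQ_def E_def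
      by (rule sum.cong) auto
    have "X / Z = p" using cp j unfolding cond_prob_h_def X_def Z_def by auto
    then have Xp: "X = p * Z" using pos Z_def by (simp add: field_simps)
    have split: "sum Q E = sum Q (E \<inter> {\<psi>. \<psi> j}) + sum Q (E \<inter> - {\<psi>. \<psi> j})"
      using finE by (metis sum.Int_Diff Diff_eq)
    have "(\<Sum>\<psi>\<in>E. Q \<psi> * h \<psi> j) = (\<Sum>\<psi>\<in>E. if \<psi> j then Q \<psi> * PS True q else Q \<psi> * PS False q)"
      using j by (intro sum.cong) (auto simp: h_def)
    also have "\<dots> = (\<Sum>\<psi>\<in>E \<inter> {\<psi>. \<psi> j}. Q \<psi> * PS True q) + (\<Sum>\<psi>\<in>E \<inter> - {\<psi>. \<psi> j}. Q \<psi> * PS False q)"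
      using finE by (rule sum.If_cases)
    also have "\<dots> = X * PS True q + (Z - X) * PS False q"
      using split Xs Zdef by (simp add: sum_distrib_right)
    also have "\<dots> = Z * S" unfolding S_def Xp by (simp add: algebra_simps)
    finally show ?thesis .
  qed
  have dec: "{..<n}-{i} = (D-{i}) \<union> ({..<n} - D)" using Dn iD by auto
  have "(\<Sum>j\<in>{..<n}-{i}. \<Sum>\<psi>\<in>E. Q \<psi> * h \<psi> j)
      = (\<Sum>j\<in>D-{i}. \<Sum>\<psi>\<in>E. Q \<psi> * h \<psi> j) + (\<Sum>j\<in>{..<n} - D. \<Sum>\<psi>\<in>E. Q \<psi> * h \<psi> j)"
    unfolding dec using finD by (intro sum.union_disjoint) auto
  also have "\<dots> = Z * ((\<Sum>j\<in>D-{i}. PS (f j) q) + real (card ({..<n} - D)) * S)"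
    using inD outD by (simp add: sum_distrib_left algebra_simps)
  also have "card ({..<n} - D) = n - card D" using Dn finD by (simp add: card_Diff_subset)
  also have "real (n - card D) = real n - real (card D)"
    using card_mono[OF finite_lessThan Dn] by simp
  finally have tot: "(\<Sum>j\<in>{..<n}-{i}. \<Sum>\<psi>\<in>E. Q \<psi> * h \<psi> j) =
     Z * ((\<Sum>j\<in>D-{i}. PS (f j) q) + (real n - real (card D)) * S)" .
  show ?thesis
    unfolding cond_util_def
    using num tot pos
    by (simp add: E_def[symmetric] Z_def[symmetric] q_def[symmetric] S_def[symmetric])
qed



lemma compare:
  fixes PS :: "bool \<Rightarrow> real \<Rightarrow> real" and P :: "bool \<Rightarrow> real" and s :: "nat \<Rightarrow> bool"
  assumes fin: "finite D" and iD: "i \<in> D"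
    and mixT: "\<exists>k\<in>D. s k" and mixF: "\<exists>k\<in>D. \<not> s k"
    and sepT: "PS True (P True) > PS False (P True)"
    and sepF: "PS False (P False) > PS True (P False)"
    and m0: "m \<ge> 0"
    and Sdef: "S = (\<lambda>b. x * PS True (P b) + (1-x) * PS False (P b))"
    and Bdef: "B = \<bar>PS True (P True)\<bar> + \<bar>PS False (P True)\<bar> + \<bar>PS True (P False)\<bar> + \<bar>PS False (P False)\<bar>"
    and good: "S True \<noteq> S False \<longrightarrow> m * \<bar>S True - S False\<bar> > 2 * (real (card D) - 1) * B"
    and rs: "rs = (if S True > S False then True else if S True < S False then False
                   else PS True (P True) \<ge> PS False (P False))"
  shows "(\<Sum>j\<in>D-{i}. PS rs (P rs)) + m * S rs > (\<Sum>j\<in>D-{i}. PS (s j) (P (s i))) + m * S (s i)"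
proof -
  have finD': "finite (D - {i})" using fin by simp
  have cardD: "real (card (D - {i})) = real (card D) - 1"
  proof -
    have "card D \<ge> 1" using fin iD by (metis One_nat_def Suc_leI card_gt_0_iff empty_iff)
    moreover have "card (D - {i}) = card D - 1" using fin iD by simp
    ultimately show ?thesis by simp
  qed
  have sep: "PS (\<not> b) (P b) < PS b (P b)" for b using sepT sepF by (cases b) auto
  show ?thesis
  proof (cases "s i = rs")
    case True
    obtain k where k: "k \<in> D" "s k \<noteq> rs" using mixT mixF by (cases rs) auto
    have "(\<Sum>j\<in>D-{i}. PS (s j) (P (s i))) < (\<Sum>j\<in>D-{i}. PS rs (P rs))"
    proof (rule sum_strict_mono_ex1[OF finD'])
      show "\<forall>j\<in>D - {i}. PS (s j) (P (s i)) \<le> PS rs (P rs)"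
      proof
        fix j assume "j \<in> D - {i}"
        show "PS (s j) (P (s i)) \<le> PS rs (P rs)"
          using True sep[of rs] by (cases "s j = rs") auto
      qed
      show "\<exists>j\<in>D - {i}. PS (s j) (P (s i)) < PS rs (P rs)"
      proof -
        have "k \<noteq> i" using k True by auto
        moreover have "PS (s k) (P (s i)) < PS rs (P rs)" using k True sep[of rs] by simp
        ultimately show ?thesis using k by blast
      qed
    qed
    then show ?thesis using True by simp
  next
    case False
    then have si: "s i = (\<not> rs)" by auto
    show ?thesis
    proof (cases "S True = S False")
      case True
      then have rs': "rs = (PS True (P True) \<ge> PS False (P False))" using rs by simp
      have SS: "S rs = S (s i)" using True by (cases rs; cases "s i") auto
      have top: "PS (s i) (P (s i)) \<le> PS rs (P rs)" using rs' si by (cases rs) auto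
      obtain k where k: "k \<in> D" "s k = rs" using mixT mixF by (cases rs) auto
      have "(\<Sum>j\<in>D-{i}. PS (s j) (P (s i))) < (\<Sum>j\<in>D-{i}. PS rs (P rs))"
      proof (rule sum_strict_mono_ex1[OF finD'])
        show "\<forall>j\<in>D - {i}. PS (s j) (P (s i)) \<le> PS rs (P rs)"
        proof
          fix j assume "j \<in> D - {i}"
          show "PS (s j) (P (s i)) \<le> PS rs (P rs)"
          proof (cases "s j = s i")
            case True then show ?thesis using top by simp
          next
            case False then have "s j = (\<not> s i)" by auto
            then show ?thesis using sep[of "s i"] top by simp
          qed
        qed
        have "k \<noteq> i" using k si by auto
        moreover have "PS (s k) (P (s i)) < PS rs (P rs)"
          using k si sep[of "s i"] top by simp
        ultimately show "\<exists>j\<in>D - {i}. PS (s j) (P (s i)) < PS rs (P rs)"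
          using k by blast
      qed
      then show ?thesis using SS by simp
    next
      case neq: False
      have Sgap: "S rs - S (s i) = \<bar>S True - S False\<bar>"
        using rs si neq by (cases "S True > S False") auto
      have bnd: "\<bar>PS b (P c)\<bar> \<le> B" for b c
        unfolding Bdef by (cases b; cases c) auto
      have L: "(\<Sum>j\<in>D-{i}. PS rs (P rs)) \<ge> - (real (card D) - 1) * B"
      proof -
        have "(\<Sum>j\<in>D-{i}. PS rs (P rs)) = real (card (D-{i})) * PS rs (P rs)" by simp
        moreover have "PS rs (P rs) \<ge> - B" using bnd[of rs rs] by linarith
        moreover have "real (card (D-{i})) \<ge> 0" by simp
        ultimately have "real (card (D-{i})) * PS rs (P rs) \<ge> real (card (D-{i})) * (- B)"
          by (intro mult_left_mono) auto
        moreover have "real (card (D-{i})) * (- B) = - (real (card D) - 1) * B"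
          by (simp only: cardD)
        ultimately show ?thesis using \<open>(\<Sum>j\<in>D-{i}. PS rs (P rs)) = real (card (D-{i})) * PS rs (P rs)\<close>
          by linarith
      qed
      have R: "(\<Sum>j\<in>D-{i}. PS (s j) (P (s i))) \<le> (real (card D) - 1) * B"
      proof -
        have "(\<Sum>j\<in>D-{i}. PS (s j) (P (s i))) \<le> (\<Sum>j\<in>D-{i}. B)"
          using bnd by (intro sum_mono) (simp add: abs_le_iff)
        then show ?thesis using cardD by simp
      qed
      have "m * (S rs - S (s i)) > 2 * (real (card D) - 1) * B" using good neq Sgap by simp
      then show ?thesis using L R by (simp add: algebra_simps)
    qed
  qed
qed



theorem mainTheorem10:
  fixes PS :: "bool \<Rightarrow> real \<Rightarrow> real"
    and Q :: "nat \<Rightarrow> (nat \<Rightarrow> bool) \<Rightarrow> real"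
    and \<D> :: "nat \<Rightarrow> nat set set"
    and Dn :: "nat \<Rightarrow> nat set"
    and d N0 :: nat
    and ph phh phl :: real
  assumes proper: "strictly_proper PS"
    and sep_h: "PS True phh > PS False phh"
    and sep_l: "PS False phl > PS True phl"
    and d2: "d \<ge> 2"
    and inst: "\<forall>n\<ge>N0. valid_prior n (Q n) \<and> Ph n (Q n) = ph \<and>
                 Pcond n (Q n) True = phh \<and> Pcond n (Q n) False = phl"
    and fam: "\<forall>n\<ge>N0. (\<forall>D\<in>\<D> n. D \<subseteq> {..<n}) \<and> Dn n \<in> \<D> n \<and> card (Dn n) = d"
    and indep: "\<exists>p :: (nat \<Rightarrow> bool) \<Rightarrow> real. \<forall>n\<ge>N0. \<forall>sD\<in>profiles (Dn n).
                 (\<exists>k\<in>Dn n. sD k) \<and> (\<exists>k\<in>Dn n. \<not> sD k) \<longrightarrow>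
                 (\<forall>j\<in>{..<n} - Dn n. cond_prob_h n (Q n) (Dn n) sD j =
                    p (\<lambda>i\<in>{..<d}. sD (sorted_list_of_set (Dn n) ! i)))"
  shows "\<forall>\<^sub>F n in sequentially. \<not> interim_equilibrium n (Q n) PS (\<D> n) truthful"
proof -
  obtain p :: "(nat \<Rightarrow> bool) \<Rightarrow> real" where pp: "\<forall>n\<ge>N0. \<forall>sD\<in>profiles (Dn n).
                 (\<exists>k\<in>Dn n. sD k) \<and> (\<exists>k\<in>Dn n. \<not> sD k) \<longrightarrow>
                 (\<forall>j\<in>{..<n} - Dn n. cond_prob_h n (Q n) (Dn n) sD j =
                    p (\<lambda>i\<in>{..<d}. sD (sorted_list_of_set (Dn n) ! i)))"
    using indep by blast
  define P where "P = (\<lambda>b. if b then phh else phl)"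
  define S where "S x = (\<lambda>b. x * PS True (P b) + (1-x) * PS False (P b))" for x
  define B where "B = \<bar>PS True (P True)\<bar> + \<bar>PS False (P True)\<bar> + \<bar>PS True (P False)\<bar> + \<bar>PS False (P False)\<bar>"
  define good where "good n x \<longleftrightarrow> (S x True \<noteq> S x False \<longrightarrow>
      (real n - real d) * \<bar>S x True - S x False\<bar> > 2 * (real d - 1) * B)" for n :: nat and x
  have ev: "\<forall>x \<in> p ` profiles {..<d}. eventually (\<lambda>n. good n x) sequentially"
  proof
    fix x
    show "eventually (\<lambda>n. good n x) sequentially"
    proof (cases "S x True = S x False")
      case True then show ?thesis by (simp add: good_def)
    next
      case False
      define \<Delta> where "\<Delta> = \<bar>S x True - S x False\<bar>"
      have \<Delta>: "\<Delta> > 0" using False by (simp add: \<Delta>_def)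
      obtain N :: nat where N: "real N > real d + 2*(real d - 1)*B/\<Delta>"
        using reals_Archimedean2 by blast
      show ?thesis unfolding eventually_sequentially
      proof (intro exI allI impI)
        fix n assume "N \<le> n"
        then have "real N \<le> real n" by simp
        then have "real n - real d > 2*(real d-1)*B/\<Delta>" using N by linarith
        then have "(real n - real d)*\<Delta> > 2*(real d-1)*B" using \<Delta> by (simp add: pos_divide_less_eq)
        then show "good n x" by (simp add: good_def \<Delta>_def)
      qed
    qed
  qed
  have fin: "finite (p ` profiles {..<d})" by (simp add: profiles_def finite_PiE)
  have ev2: "eventually (\<lambda>n. \<forall>x\<in>p ` profiles {..<d}. good n x) sequentially"
    using eventually_ball_finite[OF fin ev] .
  have ev3: "eventually (\<lambda>n. n \<ge> N0) sequentially" by (simp add: eventually_ge_at_top)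
  show ?thesis
  proof (rule eventually_mono[OF eventually_conj[OF ev2 ev3]])
    fix n assume H: "(\<forall>x\<in>p ` profiles {..<d}. good n x) \<and> N0 \<le> n"
    then have nN0: "n \<ge> N0" by simp
    have vp: "valid_prior n (Q n)" and PcT: "Pcond n (Q n) True = phh" and PcF: "Pcond n (Q n) False = phl"
      using inst nN0 by auto
    have PcP: "Pcond n (Q n) = P" using PcT PcF by (auto simp: P_def)
    define D where "D = Dn n"
    have DD: "D \<in> \<D> n" and Dsub: "D \<subseteq> {..<n}" and cD: "card D = d"
      using fam nN0 unfolding D_def by auto
    have finD: "finite D" using Dsub finite_subset by blast
    have n2: "n \<ge> 2" using vp by (simp add: valid_prior_def)
    have sym: "symmetric_prior n (Q n)" using vp by (simp add: valid_prior_def)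
    have Qnn: "\<And>\<psi>. \<psi> \<in> profiles {..<n} \<Longrightarrow> Q n \<psi> \<ge> 0" using sym by (simp add: symmetric_prior_def)
    have Qperm: "\<And>\<pi> \<psi>. \<pi> permutes {..<n} \<Longrightarrow> \<psi> \<in> profiles {..<n} \<Longrightarrow> Q n (\<psi> \<circ> \<pi>) = Q n \<psi>"
      using sym by (simp add: symmetric_prior_def)
    have finP: "finite (profiles {..<n})" by (simp add: profiles_def finite_PiE)
    obtain \<psi> where \<psi>: "\<psi> \<in> profiles {..<n}" "\<psi> 0 = False" "\<psi> 1" "Q n \<psi> > 0"
    proof -
      have "Pcond n (Q n) False > 0" using vp by (simp add: valid_prior_def)
      then have "prQ n (Q n) (\<lambda>\<psi>. \<psi> 0 = False \<and> \<psi> 1) \<noteq> 0" unfolding Pcond_def by auto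
      then obtain \<psi> where "\<psi> \<in> {\<psi>\<in>profiles {..<n}. \<psi> 0 = False \<and> \<psi> 1}" "Q n \<psi> \<noteq> 0"
        unfolding prQ_def by (meson sum.neutral)
      then show ?thesis using that Qnn by force
    qed
    obtain a where a: "a \<in> D" using cD d2 by (metis card.empty ex_in_conv not_numeral_le_zero)
    obtain b where b: "b \<in> D" "b \<noteq> a"
    proof -
      have "card (D - {a}) \<ge> 1" using cD d2 a finD by simp
      then obtain b where "b \<in> D - {a}" by (metis card.empty ex_in_conv not_one_le_zero)
      then show ?thesis using that by blast
    qed
    have an: "a < n" "b < n" using a b Dsub by auto
    define b1 where "b1 = transpose a 0 b"
    define \<pi> where "\<pi> = transpose b1 1 \<circ> transpose a 0"
    have b1n: "b1 < n" using an n2 unfolding b1_def by (auto simp: transpose_def)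
    have b10: "b1 \<noteq> 0" using b unfolding b1_def by (auto simp: transpose_def)
    have perm: "\<pi> permutes {..<n}" unfolding \<pi>_def
      using an n2 b1n by (intro permutes_compose permutes_swap_id) auto
    have \<pi>a: "\<pi> a = 0" using b10 unfolding \<pi>_def by (auto simp: transpose_def)
    have \<pi>b: "\<pi> b = 1" by (simp add: \<pi>_def b1_def[symmetric])
    define \<psi>' where "\<psi>' = \<psi> \<circ> \<pi>"
    have \<psi>'P: "\<psi>' \<in> profiles {..<n}"
    proof -
      have "\<psi>' x = undefined" if x: "x \<notin> {..<n}" for x
      proof -
        have "\<pi> x = x" using permutes_not_in[OF perm x] .
        moreover have "\<psi> x = undefined" using \<psi>(1) x unfolding profiles_def by (rule PiE_arb)
        ultimately show ?thesis unfolding \<psi>'_def by simp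
      qed
      then show ?thesis unfolding profiles_def by (simp add: PiE_iff extensional_def)
    qed
    have Q\<psi>': "Q n \<psi>' > 0" using Qperm[OF perm \<psi>(1)] \<psi>(4) unfolding \<psi>'_def by simp
    define sD where "sD = restrict \<psi>' D"
    have sDP: "sD \<in> profiles D" by (simp add: sD_def profiles_def)
    have mixT: "\<exists>k\<in>D. sD k" proof
      show "sD b" using b \<pi>b \<psi>(3) by (simp add: sD_def \<psi>'_def)
    qed (use b in auto)
    have mixF: "\<exists>k\<in>D. \<not> sD k" proof
      show "\<not> sD a" using a \<pi>a \<psi>(2) by (simp add: sD_def \<psi>'_def)
    qed (use a in auto)
    have pos: "prQ n (Q n) (\<lambda>\<phi>. \<forall>k\<in>D. \<phi> k = sD k) > 0"
    proof -
      have "Q n \<psi>' \<le> prQ n (Q n) (\<lambda>\<phi>. \<forall>k\<in>D. \<phi> k = sD k)"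
        unfolding prQ_def
        by (rule member_le_sum) (use \<psi>'P Qnn finP in \<open>auto simp: sD_def\<close>)
      then show ?thesis using Q\<psi>' by linarith
    qed
    define \<sigma> where "\<sigma> = (\<lambda>i\<in>{..<d}. sD (sorted_list_of_set D ! i))"
    have \<sigma>P: "\<sigma> \<in> profiles {..<d}" by (simp add: \<sigma>_def profiles_def)
    define x where "x = p \<sigma>"
    have cp: "\<forall>j\<in>{..<n} - D. cond_prob_h n (Q n) D sD j = x"
      using pp nN0 sDP mixT mixF unfolding x_def \<sigma>_def D_def by blast
    have gd: "good n x" using H \<sigma>P unfolding x_def by blast
    define rs where "rs = (if S x True > S x False then True else if S x True < S x False then False
                   else PS True (P True) \<ge> PS False (P False))"
    define \<Sigma>' where "\<Sigma>' = (\<lambda>k. if k \<in> D then (\<lambda>_. if rs then 1 else 0) else truthful k)"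
    have vpS: "valid_profile n \<Sigma>'" by (simp add: valid_profile_def \<Sigma>'_def truthful_def)
    have same: "\<forall>i\<in>{..<n} - D. \<Sigma>' i = truthful i" by (simp add: \<Sigma>'_def)
    have better: "\<forall>i\<in>D. cond_util n (Q n) PS \<Sigma>' D sD i > cond_util n (Q n) PS truthful D sD i"
    proof
      fix i assume iD: "i \<in> D"
      have cu1: "cond_util n (Q n) PS \<Sigma>' D sD i =
         ((\<Sum>j\<in>D-{i}. PS rs (P rs)) + (real n - real d) * S x rs) / (real n - 1)"
        using cond_util_det[OF Dsub iD n2 pos cp, of \<Sigma>' "\<lambda>_. rs" PS]
        by (simp add: \<Sigma>'_def truthful_def PcP cD S_def)
      have cu2: "cond_util n (Q n) PS truthful D sD i =
         ((\<Sum>j\<in>D-{i}. PS (sD j) (P (sD i))) + (real n - real d) * S x (sD i)) / (real n - 1)"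
        using cond_util_det[OF Dsub iD n2 pos cp, of truthful sD PS]
        by (simp add: truthful_def PcP cD S_def)
      have cmp: "(\<Sum>j\<in>D-{i}. PS rs (P rs)) + (real n - real d) * S x rs >
                 (\<Sum>j\<in>D-{i}. PS (sD j) (P (sD i))) + (real n - real d) * S x (sD i)"
      proof (rule compare[OF finD iD mixT mixF])
        show "PS False (P True) < PS True (P True)" using sep_h by (simp add: P_def)
        show "PS True (P False) < PS False (P False)" using sep_l by (simp add: P_def)
        show "0 \<le> real n - real d" using card_mono[OF finite_lessThan Dsub] cD by simp
        show "S x = (\<lambda>b. x * PS True (P b) + (1 - x) * PS False (P b))" by (simp add: S_def)
        show "B = \<bar>PS True (P True)\<bar> + \<bar>PS False (P True)\<bar> + \<bar>PS True (P False)\<bar> + \<bar>PS False (P False)\<bar>"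
          by (simp add: B_def)
        show "S x True \<noteq> S x False \<longrightarrow>
          2 * (real (card D) - 1) * B < (real n - real d) * \<bar>S x True - S x False\<bar>"
          using gd cD by (simp add: good_def)
        show "rs = (if S x False < S x True then True else if S x True < S x False then False
                   else PS False (P False) \<le> PS True (P True))" by (simp add: rs_def)
      qed
      have "real n - 1 > 0" using n2 by simp
      then show "cond_util n (Q n) PS \<Sigma>' D sD i > cond_util n (Q n) PS truthful D sD i"
        unfolding cu1 cu2 using cmp by (simp add: divide_strict_right_mono)
    qed
    show "\<not> interim_equilibrium n (Q n) PS (\<D> n) truthful"
      unfolding interim_equilibrium_def using DD sDP vpS same better by blast
  qed
qed


end
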